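(* Let $p=1^i0^j1^k$ with integers $i,k\ge0$ and $j\ge1$. For every $n\ge i+j+k$, $$M_{n,p}=\max\left\{\binom{a}{i}\binom{b}{j}\binom{c}{k}\ :\ a,b,c\ge 0,\ a+b+c=n\right\}.$$
   Context: $c_p(w)$ is the number of occurrences of $p$ as a (not necessarily consecutive) subsequence of the binary word $w$. $M_{n,p}=\max\{c_p(w): w\in\{0,1\}^n\}$. $x^m$ denotes the letter $x$ repeated $m$ times. *)

theory Defs
  imports Main
begin

definition occ :: "nat list \<Rightarrow> nat list \<Rightarrow> nat" where
  "occ p w = card {I. I \<subseteq> {0..<length w} \<and> card I = length p \<and>
      (\<forall>t < length p. w ! (sorted_list_of_set I ! t) = p ! t)}"

definition binwords :: "nat \<Rightarrow> nat list set" where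
  "binwords n = {w. length w = n \<and> set w \<subseteq> {0, 1}}"

definition Mnp :: "nat \<Rightarrow> nat list \<Rightarrow> nat" where
  "Mnp n p = Max (occ p ` binwords n)"

end

theory Submission
  imports Defs
begin

lemma map_eq_rep: "(\<forall>y\<in>set xs. f y = c) \<Longrightarrow> map f xs = replicate (length xs) c"
  by (induct xs) auto

lemma rep_set: "map f xs = replicate n c \<Longrightarrow> y \<in> set xs \<Longrightarrow> f y = c"
  by (metis imageI in_set_replicate list.set_map)

lemma cond_iff: "length L = length p \<Longrightarrow> (\<forall>t<length p. w!(L!t) = p!t) \<longleftrightarrow> map ((!) w) L = p"
  by (auto simp: list_eq_iff_nth_eq)

lemma finQ: "finite {(a choose i) * (b choose j) * (c choose k) | a b c. a + b + c = (n::nat)}"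
proof -
  have "{(a choose i) * (b choose j) * (c choose k) | a b c. a + b + c = n}
     \<subseteq> (\<lambda>(a,b,c). (a choose i) * (b choose j) * (c choose k)) ` ({..n}\<times>{..n}\<times>{..n})"
    by (force intro!: image_eqI[where x="(a,b,c)" for a b c])
  thus ?thesis by (rule finite_subset) auto
qed

lemma sl_append:
  assumes "sorted_wrt (<) (xs @ ys @ zs)"
  shows "sorted_list_of_set (set xs \<union> set ys \<union> set zs) = xs @ ys @ zs"
proof -
  have "sorted_list_of_set (set (xs @ ys @ zs)) = xs @ ys @ zs"
    using assms by (simp only: strict_sorted_iff sorted_list_of_set.idem_if_sorted_distinct)
  thus ?thesis by (simp add: Un_assoc)
qed

lemma lower:
  assumes "a + b + c = n"
  shows "(a choose i) * (b choose j) * (c choose k) \<le>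
    occ (replicate i 1 @ replicate j 0 @ replicate k 1) (replicate a 1 @ replicate b 0 @ replicate c (1::nat))"
proof -
  define p where "p = (replicate i 1 @ replicate j 0 @ replicate k (1::nat))"
  define w where "w = (replicate a 1 @ replicate b 0 @ replicate c (1::nat))"
  define AA where "AA = {A. A \<subseteq> {0..<a} \<and> card A = i}"
  define JJ where "JJ = {J. J \<subseteq> {a..<a+b} \<and> card J = j}"
  define CC where "CC = {C. C \<subseteq> {a+b..<n} \<and> card C = k}"
  define S where "S = {I. I \<subseteq> {0..<length w} \<and> card I = length p \<and>
      (\<forall>t < length p. w ! (sorted_list_of_set I ! t) = p ! t)}"
  have occ: "occ p w = card S" by (simp add: occ_def S_def)
  have cards: "card AA = a choose i" "card JJ = b choose j" "card CC = c choose k"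
    by (simp_all add: AA_def JJ_def CC_def n_subsets assms[symmetric])
  have inj: "inj_on (\<lambda>(A,J,C). A \<union> J \<union> C) (AA \<times> JJ \<times> CC)"
  proof (rule inj_onI)
    fix x y
    assume hx: "x \<in> AA \<times> JJ \<times> CC" and hy: "y \<in> AA \<times> JJ \<times> CC"
      and e: "(\<lambda>(A,J,C). A \<union> J \<union> C) x = (\<lambda>(A,J,C). A \<union> J \<union> C) y"
    obtain A J C where x: "x = (A,J,C)" by (cases x) auto
    obtain A' J' C' where y: "y = (A',J',C')" by (cases y) auto
    have d: "\<And>A J C. (A, J, C) \<in> AA \<times> JJ \<times> CC \<Longrightarrow>
       A = (A \<union> J \<union> C) \<inter> {0..<a} \<and> J = (A \<union> J \<union> C) \<inter> {a..<a+b} \<and> C = (A \<union> J \<union> C) \<inter> {a+b..<n}"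
      unfolding AA_def JJ_def CC_def by auto
    show "x = y" using d[of A J C] d[of A' J' C'] hx hy e x y by simp
  qed
  have sub: "(\<lambda>(A,J,C). A \<union> J \<union> C) ` (AA \<times> JJ \<times> CC) \<subseteq> S"
  proof clarify
    fix A J C assume hA: "A \<in> AA" and hJ: "J \<in> JJ" and hC: "C \<in> CC"
    have fin: "finite A" "finite J" "finite C"
      using hA hJ hC unfolding AA_def JJ_def CC_def by (auto intro: finite_subset)
    define LA where "LA = sorted_list_of_set A"
    define LJ where "LJ = sorted_list_of_set J"
    define LC where "LC = sorted_list_of_set C"
    have sets: "set LA = A" "set LJ = J" "set LC = C" using fin by (simp_all add: LA_def LJ_def LC_def)
    have lens: "length LA = i" "length LJ = j" "length LC = k"
      using hA hJ hC unfolding AA_def JJ_def CC_def LA_def LJ_def LC_def by simp_all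
    have srt: "sorted_wrt (<) (LA @ LJ @ LC)"
      using hA hJ hC unfolding AA_def JJ_def CC_def
      by (auto simp add: sorted_wrt_append sets)
         (auto simp add: LA_def LJ_def LC_def strict_sorted_list_of_set dest!: subsetD)
    have L: "sorted_list_of_set (A \<union> J \<union> C) = LA @ LJ @ LC"
      using sl_append[OF srt] sets by simp
    have lw: "length w = n" using assms by (simp add: w_def)
    have y1: "\<forall>y\<in>set LA. w ! y = 1"
      using hA sets unfolding AA_def w_def by (auto simp: nth_append)
    have y2: "\<forall>y\<in>set LJ. w ! y = 0"
      using hJ sets unfolding JJ_def w_def by (auto simp: nth_append)
    have y3: "\<forall>y\<in>set LC. w ! y = 1"
    proof
      fix y assume "y \<in> set LC"
      hence "a + b \<le> y" "y < a + b + c" using hC sets assms unfolding CC_def by auto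
      thus "w ! y = 1" unfolding w_def by (simp add: nth_append)
    qed
    have m1: "map ((!) w) LA = replicate i 1"
      using map_eq_rep[OF y1] lens by simp
    have m2: "map ((!) w) LJ = replicate j 0"
      using map_eq_rep[OF y2] lens by simp
    have m3: "map ((!) w) LC = replicate k 1"
      using map_eq_rep[OF y3] lens by simp
    have cardU: "card (A \<union> J \<union> C) = length p"
      using length_sorted_list_of_set[of "A \<union> J \<union> C"] L lens by (simp add: p_def)
    have "map ((!) w) (sorted_list_of_set (A \<union> J \<union> C)) = p"
      using L m1 m2 m3 by (simp add: p_def)
    hence cond: "\<forall>t < length p. w ! (sorted_list_of_set (A \<union> J \<union> C) ! t) = p ! t"
      using cond_iff[of "sorted_list_of_set (A \<union> J \<union> C)" p w] cardU
      by (simp add: length_sorted_list_of_set)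
    have "A \<union> J \<union> C \<subseteq> {0..<length w}"
    proof
      fix x assume "x \<in> A \<union> J \<union> C"
      hence "x < a + b + c" using hA hJ hC assms unfolding AA_def JJ_def CC_def by auto
      thus "x \<in> {0..<length w}" using lw assms by simp
    qed
    thus "A \<union> J \<union> C \<in> S" using cardU cond by (simp add: S_def)
  qed
  have finS: "finite S"
    by (rule finite_subset[of _ "Pow {0..<length w}"]) (auto simp: S_def)
  have "(a choose i) * (b choose j) * (c choose k) = card (AA \<times> JJ \<times> CC)"
    by (simp add: card_cartesian_product cards)
  also have "\<dots> = card ((\<lambda>(A,J,C). A \<union> J \<union> C) ` (AA \<times> JJ \<times> CC))"
    using card_image[OF inj] by simp
  also have "\<dots> \<le> card S" by (rule card_mono[OF finS sub])
  finally show ?thesis using occ p_def w_def by simp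
qed

lemma upper:
  assumes w: "w \<in> binwords n" and j1: "j \<ge> 1"
  shows "occ (replicate i 1 @ replicate j 0 @ replicate k 1) w \<le>
         Max {(a choose i) * (b choose j) * (c choose k) | a b c. a + b + c = n}"
proof -
  define p where "p = (replicate i 1 @ replicate j 0 @ replicate k (1::nat))"
  define Q where "Q = {(a choose i) * (b choose j) * (c choose k) | a b c. a + b + c = n}"
  define S where "S = {I. I \<subseteq> {0..<length w} \<and> card I = length p \<and>
      (\<forall>t < length p. w ! (sorted_list_of_set I ! t) = p ! t)}"
  have occ: "occ p w = card S" by (simp add: occ_def S_def)
  have lw: "length w = n" and sw: "set w \<subseteq> {0,1}" using w by (auto simp: binwords_def)
  define Z where "Z = {q. q < n \<and> w ! q = 0}"
  define On where "On = {q. q < n \<and> w ! q = 1}"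
  have ZOn: "Z \<union> On = {0..<n}"
  proof -
    have "\<And>q. q < n \<Longrightarrow> w ! q = 0 \<or> w ! q = 1"
      using sw lw nth_mem by fastforce
    thus ?thesis by (auto simp: Z_def On_def) (metis One_nat_def)
  qed
  have ZOnd: "Z \<inter> On = {}" by (auto simp: Z_def On_def)
  have finZ: "finite Z" and finOn: "finite On" by (auto simp: Z_def On_def)
  define m where "m = card Z"
  define T where "T = card On"
  have mT: "m + T = n" using card_Un_disjoint[OF finZ finOn ZOnd] ZOn by (simp add: m_def T_def)
  define g where "g x = (x choose i) * ((T - x) choose k)" for x
  obtain x0 where x0: "x0 \<le> T" "\<And>x. x \<le> T \<Longrightarrow> g x \<le> g x0"
  proof -
    have "Max (g ` {..T}) \<in> g ` {..T}" by (rule Max_in) auto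
    then obtain x0 where "x0 \<le> T" "Max (g ` {..T}) = g x0" by (metis atMost_iff imageE)
    moreover have "\<And>x. x \<le> T \<Longrightarrow> g x \<le> Max (g ` {..T})" by (rule Max_ge) auto
    ultimately show ?thesis using that by metis
  qed
  define JJ where "JJ = {J. J \<subseteq> Z \<and> card J = j}"
  define F where "F J = (\<lambda>(A,C). A \<union> J \<union> C) `
      ({A. A \<subseteq> On \<inter> {..<Min J} \<and> card A = i} \<times> {C. C \<subseteq> On \<inter> {Min J<..} \<and> card C = k})" for J
  have incl: "S \<subseteq> (\<Union>J\<in>JJ. F J)"
  proof
    fix I assume IS: "I \<in> S"
    hence Isub: "I \<subseteq> {0..<n}" and cI: "card I = length p"
      and cond: "\<forall>t < length p. w ! (sorted_list_of_set I ! t) = p ! t"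
      using lw by (auto simp: S_def)
    have finI: "finite I" using Isub finite_subset by blast
    define L where "L = sorted_list_of_set I"
    have lL: "length L = length p" using cI by (simp add: L_def)
    have mL: "map ((!) w) L = p" using cond_iff[OF lL] cond by (simp add: L_def)
    have sL: "sorted_wrt (<) L" by (simp add: L_def strict_sorted_list_of_set)
    have setL: "set L = I" using finI by (simp add: L_def)
    define LA where "LA = take i L"
    define LJ where "LJ = take j (drop i L)"
    define LC where "LC = drop (i+j) L"
    have Leq: "L = LA @ LJ @ LC"
      unfolding LA_def LJ_def LC_def by (metis append_take_drop_id drop_drop add.commute)
    have lens: "length LA = i" "length LJ = j" "length LC = k"
      using lL by (simp_all add: LA_def LJ_def LC_def p_def)
    have "map ((!) w) LA @ map ((!) w) LJ @ map ((!) w) LC = replicate i 1 @ replicate j 0 @ replicate k 1"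
      using mL Leq by (simp add: p_def)
    hence m1: "map ((!) w) LA = replicate i 1" and m2: "map ((!) w) LJ = replicate j 0"
      and m3: "map ((!) w) LC = replicate k 1"
      using lens by (simp_all add: append_eq_append_conv)
    have srt: "sorted_wrt (<) (LA @ LJ @ LC)" using sL Leq by simp
    hence o1: "\<forall>x\<in>set LA. \<forall>y\<in>set LJ. x < y" and o2: "\<forall>y\<in>set LJ. \<forall>z\<in>set LC. y < z"
      by (simp_all add: sorted_wrt_append)
    have dist: "distinct (LA @ LJ @ LC)" using srt strict_sorted_iff by blast
    define J where "J = set LJ"
    have inL: "set LA \<subseteq> I" "set LJ \<subseteq> I" "set LC \<subseteq> I" using setL Leq by auto
    have JZ: "J \<subseteq> Z"
    proof
      fix y assume "y \<in> J"
      hence "y \<in> set LJ" "y < n" using inL Isub by (auto simp: J_def)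
      thus "y \<in> Z" using rep_set[OF m2] by (simp add: Z_def)
    qed
    have cJ: "card J = j" using dist lens by (simp add: J_def distinct_card)
    have JJm: "J \<in> JJ" using JZ cJ by (simp add: JJ_def)
    have finJ: "finite J" "J \<noteq> {}" using lens j1 by (auto simp: J_def)
    have MJ: "Min J \<in> set LJ" using Min_in[OF finJ] by (simp add: J_def)
    have A1: "set LA \<subseteq> On \<inter> {..<Min J}"
    proof
      fix y assume y: "y \<in> set LA"
      hence "y < n" using inL Isub by auto
      moreover have "w ! y = 1" using rep_set[OF m1 y] .
      moreover have "y < Min J" using o1 y MJ by blast
      ultimately show "y \<in> On \<inter> {..<Min J}" by (simp add: On_def)
    qed
    have C1: "set LC \<subseteq> On \<inter> {Min J<..}"
    proof
      fix y assume y: "y \<in> set LC"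
      hence "y < n" using inL Isub by auto
      moreover have "w ! y = 1" using rep_set[OF m3 y] .
      moreover have "Min J < y" using o2 y MJ by blast
      ultimately show "y \<in> On \<inter> {Min J<..}" by (simp add: On_def)
    qed
    have cA: "card (set LA) = i" and cC: "card (set LC) = k"
      using dist lens by (simp_all add: distinct_card)
    have "I = (\<lambda>(A,C). A \<union> J \<union> C) (set LA, set LC)"
      using setL Leq by (auto simp: J_def)
    moreover have "(set LA, set LC) \<in> {A. A \<subseteq> On \<inter> {..<Min J} \<and> card A = i} \<times> {C. C \<subseteq> On \<inter> {Min J<..} \<and> card C = k}"
      using A1 C1 cA cC by simp
    ultimately have "I \<in> F J" unfolding F_def by (rule image_eqI)
    thus "I \<in> (\<Union>J\<in>JJ. F J)" using JJm by blast
  qed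
  have cardF: "card (F J) \<le> g x0" if J: "J \<in> JJ" for J
  proof -
    have finJ: "finite J" "J \<noteq> {}" using J j1 finZ by (auto simp: JJ_def intro: finite_subset)
    have mJ: "Min J \<in> Z" using Min_in[OF finJ] J by (auto simp: JJ_def)
    hence mO: "Min J \<notin> On" using ZOnd by auto
    define x where "x = card (On \<inter> {..<Min J})"
    have split: "On = (On \<inter> {..<Min J}) \<union> (On \<inter> {Min J<..})" using mO by (auto simp: linorder_neq_iff) (metis linorder_neq_iff)
    have "T = x + card (On \<inter> {Min J<..})"
      unfolding T_def x_def by (subst split, rule card_Un_disjoint) (use finOn in auto)
    hence cx: "card (On \<inter> {Min J<..}) = T - x" "x \<le> T" by auto
    have "card (F J) \<le> card ({A. A \<subseteq> On \<inter> {..<Min J} \<and> card A = i} \<times> {C. C \<subseteq> On \<inter> {Min J<..} \<and> card C = k})"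
      unfolding F_def by (rule card_image_le) (auto intro!: finite_cartesian_product simp: finOn)
    also have "\<dots> = g x"
    proof -
      have "card {A. A \<subseteq> On \<inter> {..<Min J} \<and> card A = i} = x choose i"
        unfolding x_def by (rule n_subsets) (use finOn in auto)
      moreover have "card {C. C \<subseteq> On \<inter> {Min J<..} \<and> card C = k} = (T - x) choose k"
        unfolding cx(1)[symmetric] by (rule n_subsets) (use finOn in auto)
      ultimately show ?thesis by (simp only: card_cartesian_product g_def)
    qed
    also have "\<dots> \<le> g x0" using x0 cx by auto
    finally show ?thesis .
  qed
  have finJJ: "finite JJ" using finZ by (auto simp: JJ_def)
  have finS: "finite S"
    by (rule finite_subset[of _ "Pow {0..<length w}"]) (auto simp: S_def)
  have "card S \<le> card (\<Union>J\<in>JJ. F J)"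
    by (rule card_mono[OF _ incl]) (use finJJ in \<open>auto simp: F_def finOn\<close>)
  also have "\<dots> \<le> (\<Sum>J\<in>JJ. card (F J))" by (rule card_UN_le[OF finJJ])
  also have "\<dots> \<le> (\<Sum>J\<in>JJ. g x0)" by (rule sum_mono) (rule cardF)
  also have "\<dots> = (x0 choose i) * (m choose j) * ((T - x0) choose k)"
    by (simp add: JJ_def n_subsets finZ m_def g_def)
  also have "\<dots> \<le> Max Q"
  proof (rule Max_ge)
    show "finite Q" unfolding Q_def by (rule finQ)
    show "(x0 choose i) * (m choose j) * ((T - x0) choose k) \<in> Q"
      unfolding Q_def using x0(1) mT by (intro CollectI exI[of _ x0] exI[of _ m] exI[of _ "T - x0"]) auto
  qed
  finally show ?thesis using occ p_def Q_def by simp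
qed

theorem mainTheorem7:
  fixes i j k n :: nat
  assumes "j \<ge> 1" and "n \<ge> i + j + k"
  shows "Mnp n (replicate i 1 @ replicate j 0 @ replicate k 1) =
         Max {(a choose i) * (b choose j) * (c choose k) | a b c. a + b + c = n}"
proof -
  define Q where "Q = {(a choose i) * (b choose j) * (c choose k) | a b c. a + b + c = n}"
  define p where "p = (replicate i 1 @ replicate j 0 @ replicate k (1::nat))"
  have finW: "finite (binwords n)"
  proof -
    have "binwords n = {xs. set xs \<subseteq> {0,1} \<and> length xs = n}" by (auto simp: binwords_def)
    thus ?thesis using finite_lists_length_eq[of "{0,1::nat}" n] by simp
  qed
  have neW: "binwords n \<noteq> {}"
    by (auto simp: binwords_def intro!: exI[of _ "replicate n 0"])
  have finQ': "finite Q" unfolding Q_def by (rule finQ)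
  have "(n choose i) * (0 choose j) * (0 choose k) \<in> Q" unfolding Q_def by (intro CollectI exI[of _ n] exI[of _ 0]) simp
  hence neQ: "Q \<noteq> {}" by blast
  have le1: "Max (occ p ` binwords n) \<le> Max Q"
    using upper[OF _ assms(1)] finW neW by (auto simp: Q_def p_def)
  have "Max Q \<in> Q" using finQ' neQ by (rule Max_in)
  then obtain a b c where abc: "a + b + c = n" "Max Q = (a choose i) * (b choose j) * (c choose k)"
    unfolding Q_def by blast
  have wb: "replicate a 1 @ replicate b 0 @ replicate c (1::nat) \<in> binwords n"
    using abc by (auto simp: binwords_def)
  have "Max Q \<le> occ p (replicate a 1 @ replicate b 0 @ replicate c (1::nat))"
    using lower[OF abc(1)] abc(2) by (simp add: p_def)
  also have "\<dots> \<le> Max (occ p ` binwords n)"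
    using finW wb by (intro Max_ge) auto
  finally show ?thesis using le1 by (simp add: Mnp_def Q_def p_def)
qed

end
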